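(* For every integer $m\ge1$, $$\beta(m;t,q)=L_m(1-q-tq,\,-tq^2).$$
   Context: For an integer $m\ge1$ and $0\le d\le m-1$ let $\rho(m;t,d)=\frac{m}{m-d}\sum_{i=0}^{d}\binom{m-1-d+i}{i}\binom{m-1-i}{d-i}t^i$, and let $\rho(m;t,m)=1+t^m$. Define $\beta(m;t,q)=\sum_{d=0}^{m}\rho(m;t,d)(-q)^d$. The Lucas polynomials are $L_0(x,s)=2$ and, for $m\ge1$, $L_m(x,s)=\sum_{i=0}^{\lfloor m/2\rfloor}\binom{m-i}{i}\frac{m}{m-i}s^ix^{m-2i}$. *)

theory Defs
  imports Main
begin

definition rho :: "nat \<Rightarrow> 'a::field_char_0 \<Rightarrow> nat \<Rightarrow> 'a" where
  "rho m t d =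
     (if d = m then 1 + t ^ m
      else of_nat m / of_nat (m - d) *
           (\<Sum>i = 0..d. of_nat ((m - 1 - d + i) choose i) * of_nat ((m - 1 - i) choose (d - i)) * t ^ i))"

definition beta :: "nat \<Rightarrow> 'a::field_char_0 \<Rightarrow> 'a \<Rightarrow> 'a" where
  "beta m t q = (\<Sum>d = 0..m. rho m t d * (- q) ^ d)"

definition lucas :: "nat \<Rightarrow> 'a::field_char_0 \<Rightarrow> 'a \<Rightarrow> 'a" where
  "lucas m x s =
     (if m = 0 then 2
      else (\<Sum>i = 0..m div 2. of_nat ((m - i) choose i) * (of_nat m / of_nat (m - i)) * s ^ i * x ^ (m - 2 * i)))"

end

theory Submission
  imports Defs
begin

definition cc :: "nat \<Rightarrow> nat \<Rightarrow> nat \<Rightarrow> 'a::field_char_0" where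
  "cc k i j = (if k = 0 then (if i = 0 \<and> j = 0 then 2 else if i = 0 \<or> j = 0 then 1 else 0)
     else of_nat (k+i+j) / of_nat k * of_nat ((k-1+i) choose i) * of_nat ((k-1+j) choose j))"

lemma nz1[simp]: "(1 + of_nat K :: 'a::field_char_0) \<noteq> 0" "(of_nat K + 1 :: 'a::field_char_0) \<noteq> 0"
  using of_nat_neq_0[of K, where 'a='a] by (simp_all add: add.commute)

lemma nz2[simp]: "(2 + of_nat K :: 'a::field_char_0) \<noteq> 0" "(of_nat K + 2 :: 'a::field_char_0) \<noteq> 0"
proof -
  have "(of_nat (K+2) :: 'a) \<noteq> 0" by (subst of_nat_eq_0_iff) simp
  then show "(2 + of_nat K :: 'a::field_char_0) \<noteq> 0" "(of_nat K + 2 :: 'a::field_char_0) \<noteq> 0"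
    unfolding of_nat_add of_nat_numeral by (simp_all add: add.commute)
qed

lemma bin1: "(K+1) * ((K+1+i) choose i) = (K+1+i) * ((K+i) choose i)"
  by (metis Nat.add_diff_assoc2 add_diff_cancel_right' binomial_absorb_comp le_add2)
lemma bin2: "(I+1) * ((K+I+1) choose (I+1)) = (K+1) * ((K+I+1) choose I)"
  by (metis Suc_eq_plus1 Suc_times_binomial_add add.commute)

lemma hA: "(of_nat ((K+1+i) choose i) :: 'a::field_char_0) = of_nat ((K+i) choose i) * (of_nat K+1+of_nat i) / (of_nat K+1)"
proof -
  have "(of_nat (K+1) :: 'a) * of_nat ((K+1+i) choose i) = of_nat (K+1+i) * of_nat ((K+i) choose i)"
    using bin1[of K i] by (metis of_nat_mult)
  then show ?thesis by (simp add: field_simps)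
qed

lemma hB: "(of_nat ((K+1+I) choose I) :: 'a::field_char_0) = of_nat ((K+I+1) choose (I+1)) * (of_nat I+1) / (of_nat K+1)"
proof -
  have "(of_nat (K+1) :: 'a) * of_nat ((K+I+1) choose I) = of_nat (I+1) * of_nat ((K+I+1) choose (I+1))"
    using bin2[of I K] by (metis of_nat_mult)
  then show ?thesis by (simp add: field_simps add.commute add.left_commute del: binomial_Suc_Suc)
qed

lemma alg0: fixes k a b P Q r s :: "'a::field_char_0"
  assumes "r*(k+1) = 1" "s*(k+2) = 1"
  shows "(k+2+a+b)*s * (P*(k+1+a)*r) * (Q*(k+1+b)*r) = (k+1+a+b)*r*P*Q + (k+1+a+b)*s*(P*(k+1+a)*r)*(Q*b*r) + (k+1+a+b)*s*(P*a*r)*(Q*(k+1+b)*r) - (k+a+b)*s*(P*a*r)*(Q*b*r)"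
  using assms by algebra

lemma alg: fixes k a b P Q :: "'a::field_char_0"
  assumes "k+1\<noteq>0" "k+2\<noteq>0"
  shows "(k+2+a+b)/(k+2) * (P*(k+1+a)/(k+1)) * (Q*(k+1+b)/(k+1)) = (k+1+a+b)/(k+1)*P*Q + (k+1+a+b)/(k+2)*(P*(k+1+a)/(k+1))*(Q*b/(k+1)) + (k+1+a+b)/(k+2)*(P*a/(k+1))*(Q*(k+1+b)/(k+1)) - (k+a+b)/(k+2)*(P*a/(k+1))*(Q*b/(k+1))"
  unfolding divide_inverse by (rule alg0) (simp_all add: assms)

lemma cc_rec2:
  "(cc (K+2) i j :: 'a::field_char_0) = cc (K+1) i j + (if 1\<le>j then cc (K+2) i (j-1) else 0)
     + (if 1\<le>i then cc (K+2) (i-1) j else 0) - (if 1\<le>i \<and> 1\<le>j then cc (K+2) (i-1) (j-1) else 0)"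
proof -
  define P where "P = (of_nat ((K+i) choose i) :: 'a)"
  define Q where "Q = (of_nat ((K+j) choose j) :: 'a)"
  have A1: "(of_nat ((K+1+i) choose i) :: 'a) = P * (of_nat K+1+of_nat i) / (of_nat K+1)"
    unfolding P_def by (rule hA)
  have A2: "(of_nat ((K+1+j) choose j) :: 'a) = Q * (of_nat K+1+of_nat j) / (of_nat K+1)"
    unfolding Q_def by (rule hA)
  have B1: "(if 1\<le>i then (of_nat ((K+1+(i-1)) choose (i-1)) :: 'a) else 0) = P * of_nat i / (of_nat K+1)"
  proof (cases i)
    case (Suc I) then show ?thesis unfolding P_def using hB[of K I] by (simp add: add.commute add.left_commute)
  qed (simp)
  have B2: "(if 1\<le>j then (of_nat ((K+1+(j-1)) choose (j-1)) :: 'a) else 0) = Q * of_nat j / (of_nat K+1)"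
  proof (cases j)
    case (Suc I) then show ?thesis unfolding Q_def using hB[of K I] by (simp add: add.commute add.left_commute)
  qed (simp)
  have e1: "(cc (K+2) i j :: 'a) = (of_nat K+2+of_nat i+of_nat j)/(of_nat K+2) * of_nat ((K+1+i) choose i) * of_nat ((K+1+j) choose j)"
    by (simp add: cc_def add.commute add.left_commute)
  have e2: "(cc (K+1) i j :: 'a) = (of_nat K+1+of_nat i+of_nat j)/(of_nat K+1) * P * Q"
    by (simp add: cc_def P_def Q_def add.commute add.left_commute)
  have e3: "(if 1\<le>j then cc (K+2) i (j-1) else 0 :: 'a) = (of_nat K+1+of_nat i+of_nat j)/(of_nat K+2) * of_nat ((K+1+i) choose i) * (if 1\<le>j then (of_nat ((K+1+(j-1)) choose (j-1)) :: 'a) else 0)"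
    by (cases j) (simp_all add: cc_def add.commute add.left_commute)
  have e4: "(if 1\<le>i then cc (K+2) (i-1) j else 0 :: 'a) = (of_nat K+1+of_nat i+of_nat j)/(of_nat K+2) * (if 1\<le>i then (of_nat ((K+1+(i-1)) choose (i-1)) :: 'a) else 0) * of_nat ((K+1+j) choose j)"
    by (cases i) (simp_all add: cc_def add.commute add.left_commute)
  have e5: "(if 1\<le>i \<and> 1\<le>j then cc (K+2) (i-1) (j-1) else 0 :: 'a) = (of_nat K+of_nat i+of_nat j)/(of_nat K+2) * (if 1\<le>i then (of_nat ((K+1+(i-1)) choose (i-1)) :: 'a) else 0) * (if 1\<le>j then (of_nat ((K+1+(j-1)) choose (j-1)) :: 'a) else 0)"
    by (cases i; cases j) (simp_all add: cc_def add.commute add.left_commute)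
  have pK1: "(of_nat K + 1 :: 'a) \<noteq> 0" by (metis of_nat_Suc of_nat_eq_0_iff nat.distinct(1) add.commute)
  have pK2: "(of_nat K + 2 :: 'a) \<noteq> 0"
    using of_nat_neq_0[of "Suc K", where 'a='a] by (simp add: add.commute)
  show ?thesis
    unfolding e1 e2 e3 e4 e5 A1 A2 B1 B2
    using pK1 pK2 by (rule alg)
qed

lemma cc_rec:
  assumes "k+i+j \<ge> 2"
  shows "(cc k i j :: 'a::field_char_0) = (if 1\<le>k then cc (k-1) i j else 0) + (if 1\<le>j then cc k i (j-1) else 0)
     + (if 1\<le>i then cc k (i-1) j else 0) - (if 1\<le>i \<and> 1\<le>j then cc k (i-1) (j-1) else 0)"
proof -
  consider "k = 0" | "k = 1" | K where "k = K+2"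
    by (metis One_nat_def add_2_eq_Suc' not0_implies_Suc)
  then show ?thesis
  proof cases
    case 1
    then show ?thesis using assms
      by (cases i; cases j) (auto simp: cc_def)
  next
    case 2
    then show ?thesis using assms
      by (cases i; cases j) (auto simp: cc_def algebra_simps)
  next
    case 3
    have e: "K + 2 - 1 = K + 1" "(1::nat) \<le> K + 2" by simp_all
    show ?thesis unfolding 3 e(1) if_P[OF e(2)] by (rule cc_rec2)
  qed
qed

definition T :: "nat \<Rightarrow> (nat \<times> nat \<times> nat) set" where
  "T n = {(k,i,j). k+i+j = n}"

lemma finite_T[simp]: "finite (T n)"
proof -
  have "T n \<subseteq> {..n} \<times> {..n} \<times> {..n}" by (auto simp: T_def)
  then show ?thesis by (rule finite_subset) auto
qed

lemma T_shift:
  fixes f :: "nat \<Rightarrow> nat \<Rightarrow> nat \<Rightarrow> 'a::comm_monoid_add"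
  shows "(\<Sum>(k,i,j)\<in>T n. f (k+a) (i+b) (j+e)) =
         (\<Sum>(k,i,j)\<in>T (n+a+b+e). if a\<le>k \<and> b\<le>i \<and> e\<le>j then f k i j else 0)"
proof -
  have "(\<Sum>(k,i,j)\<in>T (n+a+b+e). if a\<le>k \<and> b\<le>i \<and> e\<le>j then f k i j else 0)
      = (\<Sum>p\<in>{p\<in>T (n+a+b+e). case p of (k,i,j) \<Rightarrow> a\<le>k \<and> b\<le>i \<and> e\<le>j}. case p of (k,i,j) \<Rightarrow> f k i j)"
    by (subst sum.inter_filter) (auto intro!: sum.cong)
  also have "\<dots> = (\<Sum>(k,i,j)\<in>T n. f (k+a) (i+b) (j+e))"
    by (rule sum.reindex_bij_witness[where i="\<lambda>(k,i,j). (k+a,i+b,j+e)" and j="\<lambda>(k,i,j). (k-a,i-b,j-e)"])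
       (auto simp: T_def)
  finally show ?thesis by simp
qed

definition S :: "'a::field_char_0 \<Rightarrow> 'a \<Rightarrow> nat \<Rightarrow> 'a" where
  "S t u n = (\<Sum>(k,i,j)\<in>T n. cc k i j * t^i * u^(i+j))"

lemma distr4:
  fixes a :: "'a::comm_ring"
  assumes "a = (if P1 then b1 else 0) + (if P2 then b2 else 0) + (if P3 then b3 else 0) - (if P4 then b4 else 0)"
  shows "a*x*y = (if P1 then b1*x*y else 0) + (if P2 then b2*x*y else 0) + (if P3 then b3*x*y else 0) - (if P4 then b4*x*y else 0)"
  unfolding assms by (cases P1; cases P2; cases P3; cases P4) (simp_all add: algebra_simps)

lemma S_rec: "S t u (n+2) = (1+u+t*u) * S t u (n+1) + (-t*u^2) * S t u n"
proof -
  have h0: "(1+u+t*u) * S t u (n+1) = (\<Sum>(k,i,j)\<in>T (n+1). cc k i j * t^i * u^(i+j))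
      + (\<Sum>(k,i,j)\<in>T (n+1). cc k i j * t^i * u^(i+(j+1)))
      + (\<Sum>(k,i,j)\<in>T (n+1). cc k i j * t^(i+1) * u^((i+1)+j))"
    unfolding S_def sum_distrib_left sum.distrib[symmetric]
    by (rule sum.cong) (auto simp: algebra_simps power_add)
  have h0': "(-t*u^2) * S t u n = - (\<Sum>(k,i,j)\<in>T n. cc k i j * t^(i+1) * u^((i+1)+(j+1)))"
    unfolding S_def sum_distrib_left sum_negf[symmetric]
    by (rule sum.cong) (auto simp: algebra_simps power_add power2_eq_square)
  have h1: "(\<Sum>(k,i,j)\<in>T (n+1). cc k i j * t^i * u^(i+j)) = (\<Sum>(k,i,j)\<in>T (n+2). if 1\<le>k then cc (k-1) i j * t^i * u^(i+j) else 0)"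
    using T_shift[where f="\<lambda>k i j. cc (k-1) i j * t^i * u^(i+j)" and n="n+1" and a=1 and b=0 and e=0] by simp
  have h2: "(\<Sum>(k,i,j)\<in>T (n+1). cc k i j * t^i * u^(i+(j+1))) = (\<Sum>(k,i,j)\<in>T (n+2). if 1\<le>j then cc k i (j-1) * t^i * u^(i+j) else 0)"
    using T_shift[where f="\<lambda>k i j. cc k i (j-1) * t^i * u^(i+j)" and n="n+1" and a=0 and b=0 and e=1] by simp
  have h3: "(\<Sum>(k,i,j)\<in>T (n+1). cc k i j * t^(i+1) * u^((i+1)+j)) = (\<Sum>(k,i,j)\<in>T (n+2). if 1\<le>i then cc k (i-1) j * t^i * u^(i+j) else 0)"
    using T_shift[where f="\<lambda>k i j. cc k (i-1) j * t^i * u^(i+j)" and n="n+1" and a=0 and b=1 and e=0] by simp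
  have h4: "(\<Sum>(k,i,j)\<in>T n. cc k i j * t^(i+1) * u^((i+1)+(j+1))) = (\<Sum>(k,i,j)\<in>T (n+2). if 1\<le>i \<and> 1\<le>j then cc k (i-1) (j-1) * t^i * u^(i+j) else 0)"
    using T_shift[where f="\<lambda>k i j. cc k (i-1) (j-1) * t^i * u^(i+j)" and n=n and a=0 and b=1 and e=1] by simp
  have pt: "cc k i j * t^i * u^(i+j) = (if 1\<le>k then cc (k-1) i j * t^i * u^(i+j) else 0)
      + (if 1\<le>j then cc k i (j-1) * t^i * u^(i+j) else 0)
      + (if 1\<le>i then cc k (i-1) j * t^i * u^(i+j) else 0)
      - (if 1\<le>i \<and> 1\<le>j then cc k (i-1) (j-1) * t^i * u^(i+j) else 0)"
    if "(k,i,j) \<in> T (n+2)" for k i j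
  proof -
    have "k+i+j \<ge> 2" using that by (simp add: T_def)
    from distr4[OF cc_rec[OF this, where 'a='a]] show ?thesis .
  qed
  show ?thesis
    unfolding h0 h0' h1 h2 h3 h4
    unfolding S_def sum.distrib[symmetric] sum_subtractf[symmetric] diff_conv_add_uminus[symmetric]
    by (rule sum.cong) (use pt in auto)
qed

definition ll :: "nat \<Rightarrow> nat \<Rightarrow> 'a::field_char_0" where
  "ll a i = (if a = 0 \<and> i = 0 then 2 else of_nat (a+2*i) / of_nat (a+i) * of_nat ((a+i) choose i))"

lemma alg_l: fixes A I R :: "'a::field_char_0"
  assumes "r1*(A+I+2) = 1" "r2*(I+1) = 1" "r3*(A+I+1) = 1"
  shows "(A+2*I+3)*r1 * (R*(A+I+2)*r2) = (A+2*I+2)*r3*(R*(A+1)*r2) + (A+1+2*I)*r3*R"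
  using assms by algebra

lemma ll0: "(ll 0 i :: 'a::field_char_0) = 2"
proof (cases "i = 0")
  case False
  then have "(of_nat i :: 'a) \<noteq> 0" by simp
  then show ?thesis using False by (simp add: ll_def)
qed (simp add: ll_def)

lemma ll_rec:
  assumes "a + 2*i \<ge> 2"
  shows "(ll a i :: 'a::field_char_0) = (if 1\<le>a then ll (a-1) i else 0) + (if 1\<le>i then ll a (i-1) else 0)"
proof (cases a)
  case 0
  then show ?thesis using assms by (simp add: ll0)
next
  case (Suc A)
  show ?thesis
  proof (cases i)
    case 0
    then show ?thesis using Suc assms by (cases A) (simp_all add: ll_def)
  next
    case (Suc I)
    define R where "R = (of_nat ((A+I+1) choose I) :: 'a)"
    have c1: "(of_nat ((A+I+1) choose (I+1)) :: 'a) = R * (of_nat A + 1) / (of_nat I + 1)"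
    proof -
      have "(of_nat (I+1) :: 'a) * of_nat ((A+I+1) choose (I+1)) = of_nat (A+1) * R"
        unfolding R_def using bin2[of I A] by (metis of_nat_mult)
      then show ?thesis by (simp add: field_simps add.commute del: binomial_Suc_Suc)
    qed
    have c2: "(of_nat ((A+I+2) choose (I+1)) :: 'a) = R * (of_nat A + of_nat I + 2) / (of_nat I + 1)"
    proof -
      have "(of_nat (I+1) :: 'a) * of_nat ((A+I+2) choose (I+1)) = of_nat (A+I+2) * R"
        unfolding R_def using Suc_times_binomial[of I "A+I+1"] by (metis of_nat_mult add_Suc_right Suc_eq_plus1 add_2_eq_Suc' add.assoc one_add_one)
      then show ?thesis by (simp add: field_simps add.commute del: binomial_Suc_Suc)
    qed
    have e1: "(ll a i :: 'a) = (of_nat A + 2*of_nat I + 3)/(of_nat A + of_nat I + 2) * of_nat ((A+I+2) choose (I+1))"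
      unfolding ll_def using \<open>a = Suc A\<close> Suc by (simp add: algebra_simps)
    have e2: "(if 1\<le>a then ll (a-1) i else 0 :: 'a) = (of_nat A + 2*of_nat I + 2)/(of_nat A + of_nat I + 1) * of_nat ((A+I+1) choose (I+1))"
      unfolding ll_def using \<open>a = Suc A\<close> Suc by (simp add: algebra_simps)
    have e3: "(if 1\<le>i then ll a (i-1) else 0 :: 'a) = (of_nat A + 1 + 2*of_nat I)/(of_nat A + 1 + of_nat I) * R"
      unfolding ll_def R_def using \<open>a = Suc A\<close> Suc by (simp add: algebra_simps)
    have n1: "(of_nat A + of_nat I + 2 :: 'a) \<noteq> 0" using nz2(2)[of "A+I", where 'a='a] by (simp add: algebra_simps)
    have n4': "(of_nat (A+I+1)::'a) \<noteq> 0" by (subst of_nat_eq_0_iff) simp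
    have n3: "(of_nat A + of_nat I + 1 :: 'a) \<noteq> 0" using n4' unfolding of_nat_add of_nat_1 .
    have n3': "(of_nat A + 1 + of_nat I :: 'a) = of_nat A + of_nat I + 1" by simp
    show ?thesis unfolding e1 e2 e3 c1 c2 n3' divide_inverse
      apply (rule alg_l)
        apply (rule left_inverse, fact n1)
       apply (rule left_inverse, simp)
      apply (rule left_inverse, fact n3)
      done
  qed
qed

definition U :: "nat \<Rightarrow> (nat \<times> nat) set" where
  "U n = {(a,i). a + 2*i = n}"

lemma finite_U[simp]: "finite (U n)"
proof -
  have "U n \<subseteq> {..n} \<times> {..n}" by (auto simp: U_def)
  then show ?thesis by (rule finite_subset) auto
qed

lemma U_shift:
  fixes f :: "nat \<Rightarrow> nat \<Rightarrow> 'a::comm_monoid_add"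
  shows "(\<Sum>(a,i)\<in>U n. f (a+b) (i+e)) =
         (\<Sum>(a,i)\<in>U (n+b+2*e). if b\<le>a \<and> e\<le>i then f a i else 0)"
proof -
  have "(\<Sum>(a,i)\<in>U (n+b+2*e). if b\<le>a \<and> e\<le>i then f a i else 0)
      = (\<Sum>p\<in>{p\<in>U (n+b+2*e). case p of (a,i) \<Rightarrow> b\<le>a \<and> e\<le>i}. case p of (a,i) \<Rightarrow> f a i)"
    by (subst sum.inter_filter) (auto intro!: sum.cong)
  also have "\<dots> = (\<Sum>(a,i)\<in>U n. f (a+b) (i+e))"
    by (rule sum.reindex_bij_witness[where i="\<lambda>(a,i). (a+b,i+e)" and j="\<lambda>(a,i). (a-b,i-e)"])
       (auto simp: U_def)
  finally show ?thesis by simp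
qed

definition L :: "'a::field_char_0 \<Rightarrow> 'a \<Rightarrow> nat \<Rightarrow> 'a" where
  "L x s n = (\<Sum>(a,i)\<in>U n. ll a i * x^a * s^i)"

lemma distr2:
  fixes a :: "'a::comm_ring"
  assumes "a = (if P1 then b1 else 0) + (if P2 then b2 else 0)"
  shows "a*x*y = (if P1 then b1*x*y else 0) + (if P2 then b2*x*y else 0)"
  unfolding assms by (cases P1; cases P2) (simp_all add: algebra_simps)

lemma L_rec: "L x s (n+2) = x * L x s (n+1) + s * L x s n"
proof -
  have h0: "x * L x s (n+1) = (\<Sum>(a,i)\<in>U (n+1). ll a i * x^(a+1) * s^i)"
    unfolding L_def sum_distrib_left
    by (rule sum.cong) (auto simp: algebra_simps)
  have h0': "s * L x s n = (\<Sum>(a,i)\<in>U n. ll a i * x^a * s^(i+1))"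
    unfolding L_def sum_distrib_left
    by (rule sum.cong) (auto simp: algebra_simps)
  have h1: "(\<Sum>(a,i)\<in>U (n+1). ll a i * x^(a+1) * s^i) = (\<Sum>(a,i)\<in>U (n+2). if 1\<le>a then ll (a-1) i * x^a * s^i else 0)"
    using U_shift[where f="\<lambda>a i. ll (a-1) i * x^a * s^i" and n="n+1" and b=1 and e=0] by simp
  have h2: "(\<Sum>(a,i)\<in>U n. ll a i * x^a * s^(i+1)) = (\<Sum>(a,i)\<in>U (n+2). if 1\<le>i then ll a (i-1) * x^a * s^i else 0)"
    using U_shift[where f="\<lambda>a i. ll a (i-1) * x^a * s^i" and n=n and b=0 and e=1] by simp
  have pt: "ll a i * x^a * s^i = (if 1\<le>a then ll (a-1) i * x^a * s^i else 0) + (if 1\<le>i then ll a (i-1) * x^a * s^i else 0)"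
    if "(a,i) \<in> U (n+2)" for a i
  proof -
    have "a+2*i \<ge> 2" using that by (simp add: U_def)
    from distr2[OF ll_rec[OF this, where 'a='a]] show ?thesis .
  qed
  show ?thesis
    unfolding h0 h0' h1 h2
    unfolding L_def sum.distrib[symmetric]
    by (rule sum.cong) (use pt in auto)
qed

lemma lucas_L: "lucas m x s = L x s m"
proof (cases "m = 0")
  case True
  have "U 0 = {(0,0)}" by (auto simp: U_def)
  then show ?thesis using True by (simp add: lucas_def L_def ll_def)
next
  case False
  have "lucas m x s = (\<Sum>i = 0..m div 2. of_nat ((m - i) choose i) * (of_nat m / of_nat (m - i)) * s ^ i * x ^ (m - 2 * i))"
    using False by (simp add: lucas_def)
  also have "\<dots> = L x s m"
    unfolding L_def
  proof (rule sum.reindex_bij_witness[where j="\<lambda>i. (m - 2*i, i)" and i="\<lambda>(a,i). i"])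
    fix i assume i: "i \<in> {0..m div 2}"
    then have "2*i \<le> m" by auto
    then show "(case (m - 2*i, i) of (a, i) \<Rightarrow> ll a i * x ^ a * s ^ i) =
      of_nat ((m - i) choose i) * (of_nat m / of_nat (m - i)) * s ^ i * x ^ (m - 2 * i)"
      using False by (simp add: ll_def algebra_simps)
  qed (auto simp: U_def)
  finally show ?thesis .
qed

lemma rho_cc:
  assumes "d \<le> m"
  shows "rho m t d = (\<Sum>i=0..d. cc (m-d) i (d-i) * t^i)"
proof (cases "d < m")
  case True
  have r: "rho m t d = (\<Sum>i=0..d. of_nat m / of_nat (m-d) * (of_nat ((m-1-d+i) choose i) * of_nat ((m-1-i) choose (d-i)) * t^i))"
    using True by (simp add: rho_def sum_distrib_left)
  show ?thesis unfolding r
  proof (intro sum.cong refl)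
    fix i assume "i \<in> {0..d}"
    then have i: "i \<le> d" by simp
    have e1: "m - d + i + (d - i) = m" using i True by simp
    have e2: "m - d - 1 + i = m - 1 - d + i" using i True by simp
    have e3: "m - d - 1 + (d - i) = m - 1 - i" using i True by simp
    have nz: "m - d \<noteq> 0" using True by simp
    show "of_nat m / of_nat (m-d) * (of_nat ((m-1-d+i) choose i) * of_nat ((m-1-i) choose (d-i)) * t^i) = cc (m - d) i (d - i) * t ^ i"
      unfolding cc_def e1 e2 e3 using nz by (simp add: algebra_simps)
  qed
next
  case False
  then have md: "d = m" using assms by simp
  show ?thesis
  proof (cases m)
    case 0
    then show ?thesis using md by (simp add: rho_def cc_def)
  next
    case (Suc n)
    have z: "cc 0 i (Suc n - i) = (0::'a)" if "i \<in> {Suc 0..n}" for i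
      using that by (simp add: cc_def)
    have "(\<Sum>i=0..Suc n. cc 0 i (Suc n - i) * t^i) = (\<Sum>i=0..n. cc 0 i (Suc n - i) * t^i) + t^Suc n"
      by (simp add: cc_def)
    also have "(\<Sum>i=0..n. cc 0 i (Suc n - i) * t^i) = 1 + (\<Sum>i=Suc 0..n. cc 0 i (Suc n - i) * t^i)"
      by (subst sum.atLeast_Suc_atMost) (simp_all add: cc_def)
    also have "(\<Sum>i=Suc 0..n. cc 0 i (Suc n - i) * t^i) = 0"
      using z by simp
    finally show ?thesis using md Suc by (simp add: rho_def)
  qed
qed

lemma beta_S: "beta m t q = S t (-q) m"
proof -
  have "beta m t q = (\<Sum>d=0..m. \<Sum>i=0..d. cc (m-d) i (d-i) * t^i * (-q)^d)"
    unfolding beta_def by (intro sum.cong refl) (simp add: rho_cc sum_distrib_right)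
  also have "\<dots> = (\<Sum>(d,i)\<in>Sigma {0..m} (\<lambda>d. {0..d}). cc (m-d) i (d-i) * t^i * (-q)^d)"
    by (rule sum.Sigma) auto
  also have "\<dots> = S t (-q) m"
    unfolding S_def
    by (rule sum.reindex_bij_witness[where j="\<lambda>(d,i). (m-d, i, d-i)" and i="\<lambda>(k,i,j). (i+j, i)"])
       (auto simp: T_def)
  finally show ?thesis .
qed

lemma S_L: "S t u m = L (1+u+t*u) (-t*u^2) m"
proof -
  have "S t u n = L (1+u+t*u) (-t*u^2) n \<and> S t u (n+1) = L (1+u+t*u) (-t*u^2) (n+1)" for n
  proof (induction n)
    case 0
    have T0: "T 0 = {(0,0,0)}" by (auto simp: T_def)
    have T1: "T (Suc 0) = {(1,0,0),(0,1,0),(0,0,1)}" by (auto simp: T_def)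
    have U0: "U 0 = {(0,0)}" by (auto simp: U_def)
    have U1: "U (Suc 0) = {(1,0)}" by (auto simp: U_def; presburger)
    show ?case by (simp add: S_def L_def T0 T1 U0 U1 cc_def ll_def)
  next
    case (Suc n)
    have a: "S t u n = L (1+u+t*u) (-t*u^2) n" and b: "S t u (n+1) = L (1+u+t*u) (-t*u^2) (n+1)"
      using Suc.IH by simp_all
    have c: "S t u (n+2) = L (1+u+t*u) (-t*u^2) (n+2)"
      unfolding S_rec L_rec a b ..
    show ?case using b c by (simp add: add.commute)
  qed
  then show ?thesis by blast
qed

theorem lemma2p2:
  fixes t q :: "'a::field_char_0" and m :: nat
  assumes "m \<ge> 1"
  shows "beta m t q = lucas m (1 - q - t * q) (- t * q ^ 2)"
proof -
  have "beta m t q = L (1 + -q + t * -q) (-t * (-q)^2) m"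
    unfolding beta_S by (rule S_L)
  also have "\<dots> = lucas m (1 - q - t * q) (- t * q ^ 2)"
    unfolding lucas_L by simp
  finally show ?thesis .
qed
end
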